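(* Consider the SMCP instance with $|V|=4$ and $p_{uv}=p=0.64$ for all six pairs. The maximum, over all online algorithms, of the expected size of the matching produced equals $$p+p^2+(1-p)p(1+p)+(1-p)^2p(1+p)+(1-p)^3\big(1-(1-p)^3\big)\approx 1.607.$$
   Context: SMCP: vertex set $V$, probabilities $p_{uv}$ for unordered pairs; the random graph $G$ contains each pair independently with probability $p_{uv}$. An online algorithm knows $V$ and the $p_{uv}$ but not $G$; it repeatedly (adaptively, possibly randomly) probes a not-yet-probed pair of currently unmatched vertices; if the pair is an edge of $G$ it must be added to the matching and both endpoints become matched, otherwise both remain available. *)

theory Defs
  imports "HOL-Probability.Probability"
begin

(* A history is the list of probes so far: (pair, outcome). *)

definition smcp_pairs :: "nat set \<Rightarrow> nat set set" where
  "smcp_pairs V = {e. e \<subseteq> V \<and> card e = 2}"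

type_synonym history = "(nat set \<times> bool) list"

definition matched :: "history \<Rightarrow> nat set" where
  "matched h = \<Union>{e. (e, True) \<in> set h}"

definition matching_size :: "history \<Rightarrow> nat" where
  "matching_size h = card {e. (e, True) \<in> set h}"

(* A (possibly randomized, adaptive) online algorithm: given the history of probes and
   their outcomes, it chooses (randomly) either to stop (None) or to probe a pair (Some e).
   Randomization is behavioural: fresh randomness at every step. *)
type_synonym algorithm = "history \<Rightarrow> nat set option pmf"

definition valid_alg :: "nat set \<Rightarrow> algorithm \<Rightarrow> bool" where
  "valid_alg V A \<longleftrightarrow> (\<forall>h. \<forall>c \<in> set_pmf (A h). \<forall>e. c = Some e \<longrightarrow>
      e \<in> smcp_pairs V \<and> e \<notin> fst ` set h \<and> e \<inter> matched h = {})"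

primrec run :: "algorithm \<Rightarrow> (nat set \<Rightarrow> bool) \<Rightarrow> nat \<Rightarrow> history \<Rightarrow> history pmf" where
  "run A G 0 h = return_pmf h"
| "run A G (Suc n) h = bind_pmf (A h) (\<lambda>c. case c of
       None \<Rightarrow> return_pmf h
     | Some e \<Rightarrow> run A G n (h @ [(e, G e)]))"

definition random_graph :: "nat set \<Rightarrow> real \<Rightarrow> (nat set \<Rightarrow> bool) pmf" where
  "random_graph V p = Pi_pmf (smcp_pairs V) False (\<lambda>_. bernoulli_pmf p)"

(* expected matching size; card (smcp_pairs V) steps suffice since a valid algorithm
   never probes a pair twice *)
definition alg_value :: "nat set \<Rightarrow> real \<Rightarrow> algorithm \<Rightarrow> real" where
  "alg_value V p A = measure_pmf.expectation (random_graph V p)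
     (\<lambda>G. measure_pmf.expectation (run A G (card (smcp_pairs V)) []) (\<lambda>h. real (matching_size h)))"

end

theory Submission
  imports Defs
begin


definition pp :: real where "pp = 0.64"

definition PP :: "nat set set" where "PP = smcp_pairs {0..<4}"

definition comp :: "nat set \<Rightarrow> nat set" where "comp e = {0..<4} - e"

definition avail :: "history \<Rightarrow> nat set set" where
  "avail h = {e \<in> PP. e \<notin> fst ` set h \<and> e \<inter> matched h = {}}"

definition NA :: "nat set set \<Rightarrow> nat" where "NA R = card {e\<in>R. comp e \<in> R}"
definition NB :: "nat set set \<Rightarrow> nat" where "NB R = card {e\<in>R. comp e \<notin> R}"

function g :: "nat \<Rightarrow> nat \<Rightarrow> real" where
  "g a b = max (if 2 \<le> a then pp*(1+pp) + (1-pp) * g (a-2) (b+1) else 0)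
               (if 0 < b then pp + (1-pp) * g a (b-1) else 0)"
  by auto
termination by (relation "Wellfounded.measure (\<lambda>(a,b). 2*a+b)") auto

declare g.simps[simp del]

definition Gv :: "nat set set \<Rightarrow> real" where "Gv R = g (NA R) (NB R)"

lemma pp_bounds: "0 \<le> pp" "pp \<le> 1" by (simp_all add: pp_def)

lemma g_nonneg: "0 \<le> g a b"
proof (induction a b rule: g.induct)
  case (1 a b)
  show ?case
  proof (cases "2 \<le> a")
    case True
    then have "0 \<le> g (a-2) (b+1)" using 1(1) by simp
    then have "0 \<le> pp*(1+pp) + (1-pp) * g (a-2) (b+1)" by (simp add: pp_def)
    then show ?thesis using True by (subst g.simps) (simp add: le_max_iff_disj)
  next
    case False
    then show ?thesis by (subst g.simps) (simp add: le_max_iff_disj)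
  qed
qed

lemma g00: "g 0 0 = 0"
proof -
  have "g 0 0 = max (0) (0)" by (subst g.simps) (simp add: numeral_eq_Suc)
  then show ?thesis unfolding  pp_def by simp
qed
lemma g01: "g 0 1 = 16/25"
proof -
  have "g 0 1 = max (0) (pp+(1-pp)*g 0 0)" by (subst g.simps) (simp add: numeral_eq_Suc)
  then show ?thesis unfolding g00 pp_def by simp
qed
lemma g02: "g 0 2 = 544/625"
proof -
  have "g 0 2 = max (0) (pp+(1-pp)*g 0 1)" by (subst g.simps) (simp add: numeral_eq_Suc)
  then show ?thesis unfolding g01 pp_def by simp
qed
lemma g03: "g 0 3 = 14896/15625"
proof -
  have "g 0 3 = max (0) (pp+(1-pp)*g 0 2)" by (subst g.simps) (simp add: numeral_eq_Suc)
  then show ?thesis unfolding g02 pp_def by simp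
qed
lemma g20: "g 2 0 = 32/25"
proof -
  have "g 2 0 = max (pp*(1+pp)+(1-pp)*g 0 1) (0)" by (subst g.simps) (simp add: numeral_eq_Suc)
  then show ?thesis unfolding g01 pp_def by simp
qed
lemma g21: "g 2 1 = 21296/15625"
proof -
  have "g 2 1 = max (pp*(1+pp)+(1-pp)*g 0 2) (pp+(1-pp)*g 2 0)" by (subst g.simps) (simp add: numeral_eq_Suc)
  then show ?thesis unfolding g02 g20 pp_def by simp
qed
lemma g22: "g 2 2 = 544064/390625"
proof -
  have "g 2 2 = max (pp*(1+pp)+(1-pp)*g 0 3) (pp+(1-pp)*g 2 1)" by (subst g.simps) (simp add: numeral_eq_Suc)
  then show ?thesis unfolding g03 g21 pp_def by simp
qed
lemma g40: "g 4 0 = 601664/390625"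
proof -
  have "g 4 0 = max (pp*(1+pp)+(1-pp)*g 2 1) (0)" by (subst g.simps) (simp add: numeral_eq_Suc)
  then show ?thesis unfolding g21 pp_def by simp
qed
lemma g41: "g 4 1 = 15146576/9765625"
proof -
  have "g 4 1 = max (pp*(1+pp)+(1-pp)*g 2 2) (pp+(1-pp)*g 4 0)" by (subst g.simps) (simp add: numeral_eq_Suc)
  then show ?thesis unfolding g22 g40 pp_def by simp
qed
lemma g60: "g 6 0 = 392569184/244140625"
proof -
  have "g 6 0 = max (pp*(1+pp)+(1-pp)*g 4 1) (0)" by (subst g.simps) (simp add: numeral_eq_Suc)
  then show ?thesis unfolding g41 pp_def by simp
qed

lemma PP_finite: "finite PP"
  unfolding PP_def smcp_pairs_def by (rule finite_subset[of _ "Pow {0..<4}"]) auto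

lemma PP_card: "card PP = 6"
proof -
  have "card PP = card {0..<4::nat} choose 2"
    unfolding PP_def smcp_pairs_def by (rule n_subsets) simp
  then show ?thesis by (simp add: numeral_eq_Suc)
qed

lemma PP_mem: "e \<in> PP \<longleftrightarrow> e \<subseteq> {0..<4} \<and> card e = 2"
  by (simp add: PP_def smcp_pairs_def)

lemma comp_PP: assumes "e \<in> PP" shows "comp e \<in> PP" "comp e \<noteq> e" "comp (comp e) = e" "comp e \<inter> e = {}"
proof -
  have s: "e \<subseteq> {0..<4}" and c: "card e = 2" using assms by (auto simp: PP_mem)
  have fin: "finite e" using s finite_subset by blast
  have "card ({0..<4::nat} - e) = 2" using s c fin by (simp add: card_Diff_subset)
  then show "comp e \<in> PP" by (simp add: PP_mem comp_def)
  have "e \<noteq> {}" using c by auto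
  then show "comp e \<noteq> e" by (auto simp: comp_def)
  show "comp (comp e) = e" using s by (auto simp: comp_def)
  show "comp e \<inter> e = {}" by (auto simp: comp_def)
qed

lemma disj_comp: assumes "e \<in> PP" "x \<in> PP" "x \<inter> e = {}" shows "x = comp e"
proof -
  have s: "e \<subseteq> {0..<4}" and c: "card e = 2" using assms by (auto simp: PP_mem)
  have fin: "finite e" using s finite_subset by blast
  have cc: "card ({0..<4::nat} - e) = 2" using s c fin by (simp add: card_Diff_subset)
  have "x \<subseteq> {0..<4} - e" using assms by (auto simp: PP_mem)
  moreover have "card x = 2" using assms by (simp add: PP_mem)
  ultimately show ?thesis unfolding comp_def using cc by (metis card_subset_eq finite_Diff finite_atLeastLessThan)
qed

lemma avail_sub: "avail h \<subseteq> PP" by (auto simp: avail_def)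

lemma matched_F: "matched (h @ [(e, False)]) = matched h" by (auto simp: matched_def)
lemma matched_T: "matched (h @ [(e, True)]) = matched h \<union> e" by (auto simp: matched_def)

lemma ms_F: "matching_size (h @ [(e, False)]) = matching_size h" by (simp add: matching_size_def)
lemma ms_T: assumes "e \<notin> fst ` set h" shows "matching_size (h @ [(e, True)]) = matching_size h + 1"
proof -
  have eq: "{x. (x, True) \<in> set (h @ [(e, True)])} = insert e {x. (x, True) \<in> set h}" by auto
  have fin: "finite {x. (x, True) \<in> set h}"
    by (rule finite_subset[of _ "fst ` set h"]) force+
  have "e \<notin> {x. (x, True) \<in> set h}" using assms by force
  then show ?thesis unfolding matching_size_def eq using fin by simp
qed

lemma avail_F: "avail (h @ [(e, False)]) = avail h - {e}"
  by (auto simp: avail_def matched_F)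

lemma avail_T: assumes "e \<in> avail h" shows "avail (h @ [(e, True)]) = avail h \<inter> {comp e}"
proof -
  have eP: "e \<in> PP" using assms by (simp add: avail_def)
  show ?thesis
  proof (rule set_eqI, rule iffI)
    fix x assume x: "x \<in> avail (h @ [(e, True)])"
    then have "x \<in> PP" "x \<inter> e = {}" by (auto simp: avail_def matched_T)
    then have "x = comp e" using disj_comp eP by blast
    then show "x \<in> avail h \<inter> {comp e}" using x by (auto simp: avail_def matched_T)
  next
    fix x assume x: "x \<in> avail h \<inter> {comp e}"
    then show "x \<in> avail (h @ [(e, True)])" using comp_PP[OF eP]
      by (auto simp: avail_def matched_T)
  qed
qed

lemma Gv_empty: "Gv {} = 0" by (simp add: Gv_def NA_def NB_def g00)

lemma Gv_single: assumes "c \<in> PP" shows "Gv {c} = pp"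
proof -
  have "comp c \<noteq> c" using comp_PP assms by blast
  then have "{e \<in> {c}. comp e \<in> {c}} = {}" "{e \<in> {c}. comp e \<notin> {c}} = {c}" by auto
  then have "NA {c} = 0" "NB {c} = 1" unfolding NA_def NB_def by simp_all
  then show ?thesis unfolding Gv_def \<open>NA {c} = 0\<close> \<open>NB {c} = 1\<close> g01 pp_def by simp
qed

lemma finR: "R \<subseteq> PP \<Longrightarrow> finite R" using PP_finite finite_subset by blast

lemma rem_full:
  assumes R: "R \<subseteq> PP" and e: "e \<in> R" "comp e \<in> R"
  shows "2 \<le> NA R" "NA (R - {e}) = NA R - 2" "NB (R - {e}) = NB R + 1"
proof -
  have eP: "e \<in> PP" using R e by auto
  note cp = comp_PP[OF eP]
  have inv: "\<And>x. x \<in> R \<Longrightarrow> comp (comp x) = x" using R comp_PP by blast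
  have ceq: "\<And>x. x \<in> R \<Longrightarrow> comp x = e \<longleftrightarrow> x = comp e" using inv cp e by metis
  have fin: "finite R" using finR R .
  have sub: "{e, comp e} \<subseteq> {x\<in>R. comp x \<in> R}" using e cp by auto
  have c2: "card {e, comp e} = 2" using cp by simp
  have finF: "finite {x\<in>R. comp x \<in> R}" using fin by simp
  show "2 \<le> NA R" unfolding NA_def using card_mono[OF finF sub] c2 by simp
  have "{x \<in> R - {e}. comp x \<in> R - {e}} = {x\<in>R. comp x \<in> R} - {e, comp e}"
    using ceq by auto
  then show "NA (R - {e}) = NA R - 2" unfolding NA_def using card_Diff_subset[OF _ sub] c2 finF
    by (metis finite_subset sub)
  have "{x \<in> R - {e}. comp x \<notin> R - {e}} = insert (comp e) {x\<in>R. comp x \<notin> R}"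
    using ceq e cp by auto
  moreover have "comp e \<notin> {x\<in>R. comp x \<notin> R}" using cp e by auto
  ultimately show "NB (R - {e}) = NB R + 1" unfolding NB_def using fin by simp
qed

lemma rem_half:
  assumes R: "R \<subseteq> PP" and e: "e \<in> R" "comp e \<notin> R"
  shows "1 \<le> NB R" "NA (R - {e}) = NA R" "NB (R - {e}) = NB R - 1"
proof -
  have eP: "e \<in> PP" using R e by auto
  note cp = comp_PP[OF eP]
  have inv: "\<And>x. x \<in> R \<Longrightarrow> comp (comp x) = x" using R comp_PP by blast
  have ceq: "\<And>x. x \<in> R \<Longrightarrow> comp x = e \<longleftrightarrow> x = comp e" using inv cp e by metis
  have fin: "finite R" using finR R .
  have mem: "e \<in> {x\<in>R. comp x \<notin> R}" using e by auto
  show "1 \<le> NB R" unfolding NB_def using mem fin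
    by (metis (no_types, lifting) One_nat_def Suc_leI card_gt_0_iff empty_iff finite_subset mem_Collect_eq subsetI)
  have "{x \<in> R - {e}. comp x \<in> R - {e}} = {x\<in>R. comp x \<in> R}"
    using inv e by force
  then show "NA (R - {e}) = NA R" unfolding NA_def by simp
  have "{x \<in> R - {e}. comp x \<notin> R - {e}} = {x\<in>R. comp x \<notin> R} - {e}"
    using inv e by force
  then show "NB (R - {e}) = NB R - 1" unfolding NB_def using mem fin by simp
qed

definition fullv :: "nat set set \<Rightarrow> real" where
  "fullv R = pp*(1+pp) + (1-pp) * g (NA R - 2) (NB R + 1)"
definition halfv :: "nat set set \<Rightarrow> real" where
  "halfv R = pp + (1-pp) * g (NA R) (NB R - 1)"

lemma Gv_eq: "Gv R = max (if 2 \<le> NA R then fullv R else 0) (if 0 < NB R then halfv R else 0)"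
  unfolding Gv_def fullv_def halfv_def by (subst g.simps) (simp add: numeral_eq_Suc)

lemma step_val:
  assumes R: "R \<subseteq> PP" and e: "e \<in> R"
  shows "pp*(1 + Gv (R \<inter> {comp e})) + (1-pp) * Gv (R - {e}) =
         (if comp e \<in> R then fullv R else halfv R)"
proof (cases "comp e \<in> R")
  case True
  have "R \<inter> {comp e} = {comp e}" using True by auto
  moreover have "comp e \<in> PP" using True R by auto
  ultimately have "Gv (R \<inter> {comp e}) = pp" using Gv_single by simp
  then show ?thesis using rem_full[OF R e True] True
    by (simp add: Gv_single Gv_def fullv_def algebra_simps)
next
  case False
  have "R \<inter> {comp e} = {}" using False by auto
  then have "Gv (R \<inter> {comp e}) = 0" using Gv_empty by simp
  then show ?thesis using rem_half[OF R e False] False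
    by (simp add: Gv_empty Gv_def halfv_def algebra_simps)
qed

lemma fullv_nonneg: "0 \<le> fullv R" unfolding fullv_def using g_nonneg[of "NA R - 2" "NB R + 1"]
  by (simp add: pp_def)
lemma halfv_nonneg: "0 \<le> halfv R" unfolding halfv_def using g_nonneg[of "NA R" "NB R - 1"]
  by (simp add: pp_def)

lemma bellman:
  assumes R: "R \<subseteq> PP" and e: "e \<in> R"
  shows "pp*(1 + Gv (R \<inter> {comp e})) + (1-pp) * Gv (R - {e}) \<le> Gv R"
proof (cases "comp e \<in> R")
  case True
  then show ?thesis using step_val[OF R e] rem_full(1)[OF R e True] by (simp add: Gv_eq)
next
  case False
  then show ?thesis using step_val[OF R e] rem_half(1)[OF R e False] by (simp add: Gv_eq)
qed

lemma Gv_nonneg: "0 \<le> Gv R" unfolding Gv_def by (rule g_nonneg)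

definition pick :: "nat set set \<Rightarrow> nat set option" where
  "pick R = (if R = {} then None
     else if 2 \<le> NA R \<and> (NB R = 0 \<or> halfv R \<le> fullv R) then Some (SOME e. e \<in> R \<and> comp e \<in> R)
     else Some (SOME e. e \<in> R \<and> comp e \<notin> R))"

lemma pick_spec:
  assumes R: "R \<subseteq> PP" "R \<noteq> {}"
  shows "\<exists>e. pick R = Some e \<and> e \<in> R \<and> pp*(1 + Gv (R \<inter> {comp e})) + (1-pp) * Gv (R - {e}) = Gv R"
proof (cases "2 \<le> NA R \<and> (NB R = 0 \<or> halfv R \<le> fullv R)")
  case True
  have "{e\<in>R. comp e \<in> R} \<noteq> {}" using True unfolding NA_def by (metis card.empty not_numeral_le_zero)
  then have "\<exists>e. e \<in> R \<and> comp e \<in> R" by auto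
  then have ex: "(SOME e. e \<in> R \<and> comp e \<in> R) \<in> R \<and> comp (SOME e. e \<in> R \<and> comp e \<in> R) \<in> R"
    by (rule someI_ex)
  have "Gv R = fullv R" using True fullv_nonneg[of R] by (auto simp: Gv_eq)
  then show ?thesis using True R ex step_val[OF R(1), of "SOME e. e \<in> R \<and> comp e \<in> R"]
    by (auto simp: pick_def)
next
  case False
  have nb: "0 < NB R"
  proof (rule ccontr)
    assume "\<not> 0 < NB R"
    then have nb0: "NB R = 0" by simp
    have fin: "finite R" using finR R(1) .
    have "{e\<in>R. comp e \<notin> R} = {}" using nb0 fin unfolding NB_def by simp
    then have all: "\<And>e. e \<in> R \<Longrightarrow> comp e \<in> R" by auto
    obtain e where e: "e \<in> R" using R(2) by auto
    then have "2 \<le> NA R" using rem_full(1)[OF R(1) e all[OF e]] by simp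
    then show False using False nb0 by simp
  qed
  have "{e\<in>R. comp e \<notin> R} \<noteq> {}" using nb unfolding NB_def by (metis card.empty less_irrefl)
  then have "\<exists>e. e \<in> R \<and> comp e \<notin> R" by auto
  then have ex: "(SOME e. e \<in> R \<and> comp e \<notin> R) \<in> R \<and> comp (SOME e. e \<in> R \<and> comp e \<notin> R) \<notin> R"
    by (rule someI_ex)
  have "Gv R = halfv R" using False nb halfv_nonneg[of R] by (auto simp: Gv_eq)
  then show ?thesis using False R ex step_val[OF R(1), of "SOME e. e \<in> R \<and> comp e \<notin> R"]
    by (auto simp: pick_def)
qed

lemma Gv_PP: "Gv PP = g 6 0"
proof -
  have a: "{e\<in>PP. comp e \<in> PP} = PP" and b: "{e\<in>PP. comp e \<notin> PP} = {}" using comp_PP by auto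
  show ?thesis unfolding Gv_def NA_def NB_def a b PP_card by simp
qed



lemma exp_bind:
  fixes \<phi> :: "'b \<Rightarrow> real"
  assumes bd: "\<And>x y. x \<in> set_pmf M \<Longrightarrow> y \<in> set_pmf (f x) \<Longrightarrow> \<bar>\<phi> y\<bar> \<le> B"
  shows "measure_pmf.expectation (bind_pmf M f) \<phi> = measure_pmf.expectation M (\<lambda>x. measure_pmf.expectation (f x) \<phi>)"
proof -
  define S where "S = set_pmf (bind_pmf M f)"
  define \<psi> where "\<psi> y = (if y \<in> S then \<phi> y else 0)" for y
  obtain y0 where "y0 \<in> S" unfolding S_def using set_pmf_not_empty[of "bind_pmf M f"] by blast
  then obtain x0 where "x0 \<in> set_pmf M" "y0 \<in> set_pmf (f x0)" unfolding S_def by auto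
  then have "\<bar>\<phi> y0\<bar> \<le> B" by (rule bd)
  then have B0: "0 \<le> B" by linarith
  have bnd: "\<bar>\<psi> y\<bar> \<le> B" for y using bd B0 by (auto simp: \<psi>_def S_def)
  have e1: "measure_pmf.expectation (bind_pmf M f) \<phi> = measure_pmf.expectation (bind_pmf M f) \<psi>"
    by (rule integral_cong_AE) (auto intro!: AE_pmfI simp: \<psi>_def S_def)
  have e2: "measure_pmf.expectation M (\<lambda>x. measure_pmf.expectation (f x) \<phi>) =
            measure_pmf.expectation M (\<lambda>x. measure_pmf.expectation (f x) \<psi>)"
    by (rule integral_cong_AE) (auto intro!: AE_pmfI integral_cong_AE simp: \<psi>_def S_def)
  have "measure_pmf (bind_pmf M f) = measure_pmf M \<bind> (\<lambda>x. measure_pmf (f x))"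
    by (rule measure_pmf_bind)
  moreover have "integral\<^sup>L (measure_pmf M \<bind> (\<lambda>x. measure_pmf (f x))) \<psi> = \<integral>x. integral\<^sup>L (measure_pmf (f x)) \<psi> \<partial>measure_pmf M"
  proof (rule integral_bind[where K="count_space UNIV" and B=B and B'=1])
    show "\<psi> \<in> borel_measurable (count_space UNIV)" by simp
    show "\<And>x. x \<in> space (count_space UNIV) \<Longrightarrow> \<bar>\<psi> x\<bar> \<le> B" using bnd by simp
    show "(\<lambda>x. measure_pmf (f x)) \<in> measurable (measure_pmf M) (subprob_algebra (count_space UNIV))"
      by (simp add: measure_subprob)
    show "finite_measure (measure_pmf M)" using measure_pmf.prob_space_axioms by (simp add: prob_space_def)
    show "AE x in measure_pmf M. emeasure (measure_pmf (f x)) (space (measure_pmf (f x))) \<le> ennreal 1"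
      by (simp add: measure_pmf.emeasure_space_1)
  qed
  ultimately show ?thesis using e1 e2 by simp
qed

lemma run_len: "y \<in> set_pmf (run A G n h) \<Longrightarrow> length y \<le> length h + n"
proof (induction n arbitrary: h)
  case 0 then show ?case by simp
next
  case (Suc n)
  then show ?case by (fastforce split: option.splits)
qed

lemma ms_le: "matching_size y \<le> length y"
proof -
  have "{e. (e, True) \<in> set y} \<subseteq> fst ` set y" by force
  then have "card {e. (e, True) \<in> set y} \<le> card (fst ` set y)" by (intro card_mono) auto
  also have "\<dots> \<le> card (set y)" by (rule card_image_le) simp
  also have "\<dots> \<le> length y" by (rule card_length)
  finally show ?thesis by (simp add: matching_size_def)
qed

definition Sx :: "history \<Rightarrow> nat set set" where "Sx h = PP - fst ` set h"
definition mix :: "history \<Rightarrow> (nat set \<Rightarrow> bool) \<Rightarrow> (nat set \<Rightarrow> bool) \<Rightarrow> nat set \<Rightarrow> bool" where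
  "mix h G0 G = (\<lambda>x. if x \<in> Sx h then G x else G0 x)"
definition D :: "algorithm \<Rightarrow> history \<Rightarrow> (nat set \<Rightarrow> bool) \<Rightarrow> nat \<Rightarrow> history pmf" where
  "D A h G0 n = bind_pmf (Pi_pmf (Sx h) False (\<lambda>_. bernoulli_pmf pp)) (\<lambda>G. run A (mix h G0 G) n h)"

abbreviation ms :: "history \<Rightarrow> real" where "ms y \<equiv> real (matching_size y)"

lemma D_len: "y \<in> set_pmf (D A h G0 n) \<Longrightarrow> length y \<le> length h + n"
  unfolding D_def using run_len by fastforce

lemma D_0: "D A h G0 0 = return_pmf h" by (simp add: D_def)

lemma D_Suc: "D A h G0 (Suc n) = bind_pmf (A h) (\<lambda>c. case c of None \<Rightarrow> return_pmf h
   | Some e \<Rightarrow> bind_pmf (Pi_pmf (Sx h) False (\<lambda>_. bernoulli_pmf pp))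
        (\<lambda>G. run A (mix h G0 G) n (h @ [(e, mix h G0 G e)])))"
  unfolding D_def run.simps
  apply (subst bind_commute_pmf)
  apply (rule bind_pmf_cong[OF refl])
  subgoal for c by (cases c) simp_all
  done

lemma Sx_finite: "finite (Sx h)" unfolding Sx_def using PP_finite by simp

lemma D_Some:
  assumes e: "e \<in> Sx h"
  shows "bind_pmf (Pi_pmf (Sx h) False (\<lambda>_. bernoulli_pmf pp))
        (\<lambda>G. run A (mix h G0 G) n (h @ [(e, mix h G0 G e)]))
       = bind_pmf (bernoulli_pmf pp) (\<lambda>b. D A (h @ [(e, b)]) (G0(e := b)) n)"
proof -
  have S: "Sx h = insert e (Sx h - {e})" using e by auto
  have S2: "\<And>b. Sx (h @ [(e, b)]) = Sx h - {e}" by (auto simp: Sx_def)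
  have P: "Pi_pmf (Sx h) False (\<lambda>_. bernoulli_pmf pp) =
      do {y \<leftarrow> bernoulli_pmf pp; f \<leftarrow> Pi_pmf (Sx h - {e}) False (\<lambda>_. bernoulli_pmf pp); return_pmf (f(e := y))}"
    by (subst S, rule Pi_pmf_insert') (use Sx_finite in auto)
  have m1: "mix h G0 (f(e := b)) = mix (h @ [(e, b)]) (G0(e := b)) f" for f b
    unfolding mix_def S2 using e by (auto simp: fun_eq_iff)
  have m2: "mix h G0 (f(e := b)) e = b" for f b using e by (simp add: mix_def)
  have m3: "mix (h @ [(e, b)]) (G0(e := b)) f e = b" for f b by (simp add: mix_def S2)
  show ?thesis
    unfolding P D_def S2 by (simp add: bind_assoc_pmf bind_return_pmf m1 m2 m3)
qed

lemma exp_bern_D: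
  "measure_pmf.expectation (bind_pmf (bernoulli_pmf pp) (\<lambda>b. D A (h @ [(e, b)]) (G0(e := b)) n)) ms
   = pp * measure_pmf.expectation (D A (h @ [(e, True)]) (G0(e := True)) n) ms
   + (1 - pp) * measure_pmf.expectation (D A (h @ [(e, False)]) (G0(e := False)) n) ms"
proof -
  have "measure_pmf.expectation (bind_pmf (bernoulli_pmf pp) (\<lambda>b. D A (h @ [(e, b)]) (G0(e := b)) n)) ms
      = measure_pmf.expectation (bernoulli_pmf pp) (\<lambda>b. measure_pmf.expectation (D A (h @ [(e, b)]) (G0(e := b)) n) ms)"
  proof (rule exp_bind[where B="real (length h + 1 + n)"])
    fix b y assume "y \<in> set_pmf (D A (h @ [(e, b)]) (G0(e := b)) n)"
    then have "length y \<le> length h + 1 + n" using D_len by fastforce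
    then show "\<bar>ms y\<bar> \<le> real (length h + 1 + n)" using ms_le[of y] by simp
  qed
  then show ?thesis using pp_bounds by (simp add: algebra_simps)
qed

lemma ub:
  assumes V: "valid_alg {0..<4} A"
  shows "measure_pmf.expectation (D A h G0 n) ms \<le> ms h + Gv (avail h)"
proof (induction n arbitrary: h G0)
  case 0
  then show ?case using Gv_nonneg by (simp add: D_0)
next
  case (Suc n)
  define K where "K = (\<lambda>c. case c of None \<Rightarrow> return_pmf h
   | Some e \<Rightarrow> bind_pmf (Pi_pmf (Sx h) False (\<lambda>_. bernoulli_pmf pp))
        (\<lambda>G. run A (mix h G0 G) n (h @ [(e, mix h G0 G e)])))"
  have Kl: "y \<in> set_pmf (K c) \<Longrightarrow> length y \<le> length h + Suc n" for c y
    unfolding K_def using run_len by (fastforce split: option.splits)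
  have "measure_pmf.expectation (D A h G0 (Suc n)) ms = measure_pmf.expectation (A h) (\<lambda>c. measure_pmf.expectation (K c) ms)"
    unfolding D_Suc K_def[symmetric]
  proof (rule exp_bind[where B="real (length h + Suc n)"])
    fix c y assume "y \<in> set_pmf (K c)"
    then show "\<bar>ms y\<bar> \<le> real (length h + Suc n)" using Kl[of y c] ms_le[of y] by simp
  qed
  also have "\<dots> \<le> ms h + Gv (avail h)"
  proof (rule measure_pmf.integral_le_const)
    have "c \<in> insert None (Some ` PP)" if "c \<in> set_pmf (A h)" for c
    proof (cases c)
      case (Some e)
      then have "e \<in> PP" using V that unfolding valid_alg_def PP_def by blast
      then show ?thesis using Some by simp
    qed simp
    then have "set_pmf (A h) \<subseteq> insert None (Some ` PP)" by blast
    then have "finite (set_pmf (A h))" using PP_finite finite_subset by blast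
    then show "integrable (measure_pmf (A h)) (\<lambda>c. measure_pmf.expectation (K c) ms)"
      by (rule integrable_measure_pmf_finite)
    show "AE c in measure_pmf (A h). measure_pmf.expectation (K c) ms \<le> ms h + Gv (avail h)"
    proof (rule AE_pmfI)
      fix c assume c: "c \<in> set_pmf (A h)"
      show "measure_pmf.expectation (K c) ms \<le> ms h + Gv (avail h)"
      proof (cases c)
        case None
        then show ?thesis using Gv_nonneg by (simp add: K_def)
      next
        case (Some e)
        have "e \<in> smcp_pairs {0..<4} \<and> e \<notin> fst ` set h \<and> e \<inter> matched h = {}"
          using V c Some unfolding valid_alg_def by blast
        then have ea: "e \<in> avail h" unfolding avail_def PP_def by blast
        then have eS: "e \<in> Sx h" and nf: "e \<notin> fst ` set h" by (auto simp: avail_def Sx_def)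
        have R: "avail h \<subseteq> PP" by (rule avail_sub)
        have "measure_pmf.expectation (K c) ms =
              pp * measure_pmf.expectation (D A (h @ [(e, True)]) (G0(e := True)) n) ms
            + (1 - pp) * measure_pmf.expectation (D A (h @ [(e, False)]) (G0(e := False)) n) ms"
          unfolding K_def Some option.case D_Some[OF eS] by (rule exp_bern_D)
        also have "\<dots> \<le> pp * (ms h + 1 + Gv (avail h \<inter> {comp e})) + (1 - pp) * (ms h + Gv (avail h - {e}))"
        proof -
          define ET where "ET = measure_pmf.expectation (D A (h @ [(e, True)]) (G0(e := True)) n) ms"
          define EF where "EF = measure_pmf.expectation (D A (h @ [(e, False)]) (G0(e := False)) n) ms"
          have hT: "ET \<le> real (matching_size h + 1) + Gv (avail h \<inter> {comp e})"
            unfolding ET_def using Suc.IH[of "h @ [(e, True)]" "G0(e := True)"] unfolding ms_T[OF nf] avail_T[OF ea] .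
          have hF: "EF \<le> ms h + Gv (avail h - {e})"
            unfolding EF_def using Suc.IH[of "h @ [(e, False)]" "G0(e := False)"] unfolding ms_F avail_F .
          have "pp * ET + (1 - pp) * EF \<le> pp * (ms h + 1 + Gv (avail h \<inter> {comp e})) + (1 - pp) * (ms h + Gv (avail h - {e}))"
            using hT hF pp_bounds by (intro add_mono mult_left_mono) simp_all
          then show ?thesis unfolding ET_def EF_def .
        qed
        also have "\<dots> = ms h + (pp * (1 + Gv (avail h \<inter> {comp e})) + (1 - pp) * Gv (avail h - {e}))"
          by (simp add: algebra_simps)
        also have "\<dots> \<le> ms h + Gv (avail h)" using bellman[OF R ea] by simp
        finally show ?thesis .
      qed
    qed
  qed
  finally show ?case .
qed

definition pol :: algorithm where "pol h = return_pmf (pick (avail h))"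

lemma pick_None: "pick {} = None" by (simp add: pick_def)

lemma pol_valid: "valid_alg {0..<4} pol"
  unfolding valid_alg_def
proof (intro allI ballI impI)
  fix h c e assume c: "c \<in> set_pmf (pol h)" and ce: "c = Some e"
  have "pick (avail h) = Some e" using c ce by (simp add: pol_def)
  moreover have "avail h \<noteq> {}" using calculation pick_None by force
  ultimately have "e \<in> avail h" using pick_spec[OF avail_sub] by fastforce
  then show "e \<in> smcp_pairs {0..<4} \<and> e \<notin> fst ` set h \<and> e \<inter> matched h = {}"
    by (simp add: avail_def PP_def)
qed

lemma eqv:
  shows "card (avail h) \<le> n \<Longrightarrow> measure_pmf.expectation (D pol h G0 n) ms = ms h + Gv (avail h)"
proof (induction n arbitrary: h G0)
  case 0
  then have "avail h = {}" using finR[OF avail_sub] by simp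
  then show ?case by (simp add: D_0 Gv_empty)
next
  case (Suc n)
  show ?case
  proof (cases "avail h = {}")
    case True
    then show ?thesis by (simp add: D_Suc pol_def pick_None bind_return_pmf Gv_empty)
  next
    case False
    have R: "avail h \<subseteq> PP" by (rule avail_sub)
    obtain e where pe: "pick (avail h) = Some e" and ea: "e \<in> avail h"
      and val: "pp*(1 + Gv (avail h \<inter> {comp e})) + (1-pp) * Gv (avail h - {e}) = Gv (avail h)"
      using pick_spec[OF R False] by blast
    then have eS: "e \<in> Sx h" and nf: "e \<notin> fst ` set h" by (auto simp: avail_def Sx_def)
    have fin: "finite (avail h)" using finR[OF R] .
    have cne: "comp e \<noteq> e" using comp_PP R ea by blast
    have cF: "card (avail (h @ [(e, False)])) \<le> n"
      using Suc.prems fin ea by (simp add: avail_F)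
    have "card (avail (h @ [(e, True)])) \<le> card (avail h - {e})"
      unfolding avail_T[OF ea] using fin cne by (intro card_mono) auto
    then have cT: "card (avail (h @ [(e, True)])) \<le> n"
      using Suc.prems fin ea by simp
    have "measure_pmf.expectation (D pol h G0 (Suc n)) ms =
              pp * measure_pmf.expectation (D pol (h @ [(e, True)]) (G0(e := True)) n) ms
            + (1 - pp) * measure_pmf.expectation (D pol (h @ [(e, False)]) (G0(e := False)) n) ms"
      unfolding D_Suc pol_def[of h] pe bind_return_pmf option.case D_Some[OF eS] by (rule exp_bern_D)
    also have "\<dots> = pp * (ms h + 1 + Gv (avail h \<inter> {comp e})) + (1 - pp) * (ms h + Gv (avail h - {e}))"
    proof -
      define ET where "ET = measure_pmf.expectation (D pol (h @ [(e, True)]) (G0(e := True)) n) ms"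
      define EF where "EF = measure_pmf.expectation (D pol (h @ [(e, False)]) (G0(e := False)) n) ms"
      have hT: "ET = real (matching_size h + 1) + Gv (avail h \<inter> {comp e})"
        unfolding ET_def using Suc.IH[OF cT, of "G0(e := True)"] unfolding ms_T[OF nf] avail_T[OF ea] .
      have hF: "EF = ms h + Gv (avail h - {e})"
        unfolding EF_def using Suc.IH[OF cF, of "G0(e := False)"] unfolding ms_F avail_F .
      have "pp * ET + (1 - pp) * EF = pp * (ms h + 1 + Gv (avail h \<inter> {comp e})) + (1 - pp) * (ms h + Gv (avail h - {e}))"
        using hT hF by simp
      then show ?thesis unfolding ET_def EF_def .
    qed
    also have "\<dots> = ms h + (pp * (1 + Gv (avail h \<inter> {comp e})) + (1 - pp) * Gv (avail h - {e}))"
      by (simp add: algebra_simps)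
    also have "\<dots> = ms h + Gv (avail h)" using val by simp
    finally show ?thesis .
  qed
qed

lemma alg_value_D:
  "alg_value {0..<4} pp A = measure_pmf.expectation (D A [] (\<lambda>_. False) 6) ms"
proof -
  have c6: "card (smcp_pairs {0..<4}) = 6" using PP_card by (simp add: PP_def)
  have "alg_value {0..<4} pp A = measure_pmf.expectation
      (bind_pmf (Pi_pmf PP False (\<lambda>_. bernoulli_pmf pp)) (\<lambda>G. run A G 6 [])) ms"
    unfolding alg_value_def random_graph_def PP_def[symmetric] PP_card
  proof (rule exp_bind[symmetric, where B=6])
    fix G y assume "y \<in> set_pmf (run A G 6 [])"
    then have "length y \<le> 6" using run_len by fastforce
    then show "\<bar>ms y\<bar> \<le> 6" using ms_le[of y] by simp
  qed
  also have "bind_pmf (Pi_pmf PP False (\<lambda>_. bernoulli_pmf pp)) (\<lambda>G. run A G 6 []) = D A [] (\<lambda>_. False) 6"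
  proof -
    have "D A [] (\<lambda>_. False) 6 = bind_pmf (map_pmf (\<lambda>f x. if x \<in> PP then f x else False)
        (Pi_pmf PP False (\<lambda>_. bernoulli_pmf pp))) (\<lambda>G. run A G 6 [])"
      unfolding D_def bind_map_pmf by (simp add: Sx_def mix_def)
    also have "\<dots> = bind_pmf (Pi_pmf PP False (\<lambda>_. bernoulli_pmf pp)) (\<lambda>G. run A G 6 [])"
      using Pi_pmf_default_swap[OF PP_finite, of False False "\<lambda>_. bernoulli_pmf pp"] by simp
    finally show ?thesis by simp
  qed
  finally show ?thesis .
qed

lemma avail_nil: "avail [] = PP" by (simp add: avail_def matched_def)

lemma main_ub: "valid_alg {0..<4} A \<Longrightarrow> alg_value {0..<4} pp A \<le> g 6 0"
  using ub[of A "[]" "\<lambda>_. False" 6] by (simp add: alg_value_D avail_nil Gv_PP matching_size_def)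

lemma main_eq: "alg_value {0..<4} pp pol = g 6 0"
  using eqv[of "[]" 6 "\<lambda>_. False"] by (simp add: alg_value_D avail_nil Gv_PP matching_size_def PP_card)


theorem lemma6:
  fixes p :: real
  defines "p \<equiv> 0.64"
  shows "(\<exists>A. valid_alg {0..<4} A \<and>
            alg_value {0..<4} p A =
              p + p^2 + (1-p)*p*(1+p) + (1-p)^2*p*(1+p) + (1-p)^3*(1-(1-p)^3))
       \<and> (\<forall>A. valid_alg {0..<4} A \<longrightarrow>
            alg_value {0..<4} p A \<le>
              p + p^2 + (1-p)*p*(1+p) + (1-p)^2*p*(1+p) + (1-p)^3*(1-(1-p)^3))"
proof -
  have pp: "p = pp" by (simp add: p_def pp_def)
  have val: "g 6 0 = p + p^2 + (1-p)*p*(1+p) + (1-p)^2*p*(1+p) + (1-p)^3*(1-(1-p)^3)"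
    unfolding g60 p_def by (simp add: power_numeral_reduce power2_eq_square)
  have "(\<exists>A. valid_alg {0..<4} A \<and> alg_value {0..<4} p A = g 6 0)
       \<and> (\<forall>A. valid_alg {0..<4} A \<longrightarrow> alg_value {0..<4} p A \<le> g 6 0)"
    unfolding pp using main_ub main_eq pol_valid by blast
  then show ?thesis unfolding val .
qed

end
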